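(* Let $n\ge2$ and let $U^+$ be the subalgebra of $U_{r,s}(\mathfrak{so}_{2n+1})$ generated by $e_1,\dots,e_n$, with root vectors as in the context. Then in $U^+$: (1) $e_l\mathcal E_{i,j}=\mathcal E_{i,j}e_l$ for $i<l<j\le n$; (2) $\mathcal E_{i,l}\mathcal E_{l,j}-(rs)^2\mathcal E_{l,j}\mathcal E_{i,l}=(s^2-r^2)e_l\mathcal E_{i,j}$ for $i<l<j\le n$; (3) $\mathcal E_{i,j}\mathcal E_{k,l}=\mathcal E_{k,l}\mathcal E_{i,j}$ for $i<k\le l<j\le n$; (4) $\mathcal E_{i,j}\mathcal E_{l,j}=s^2\mathcal E_{l,j}\mathcal E_{i,j}$ for $i<l\le j<n$; (5) $\mathcal E_{i,l}\mathcal E_{i,j}=s^2\mathcal E_{i,j}\mathcal E_{i,l}$ for $i\le l<j\le n$; (6) $e_l\mathcal E_{i,j'}=\mathcal E_{i,j'}e_l$ for $i<l$, $l+1<j\le n$; (7) $\mathcal E_{i,l}\mathcal E_{l,j'}-(rs)^2\mathcal E_{l,j'}\mathcal E_{i,l}=(s^2-r^2)e_l\mathcal E_{i,j'}$ for $i<l$, $l+1<j\le n$; (8) $\mathcal E_{i,j'}\mathcal E_{k,l}=\mathcal E_{k,l}\mathcal E_{i,j'}$ for $i<k\le l$, $l+1<j\le n$; (9) $\mathcal E_{i,l}\mathcal E_{i,j'}=s^2\mathcal E_{i,j'}\mathcal E_{i,l}$ for $i\le l$, $l+1<j\le n$.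
   Context: Let $r,s\in\mathbb C^*$ with $r^3\ne s^3$, $r^4\ne s^4$, $\mathbb K=\mathbb Q(r,s)$. $U_{r,s}(\mathfrak{so}_{2n+1})$ is the $\mathbb K$-algebra generated by $e_i,f_i,\omega_i^{\pm1},\omega_i'^{\pm1}$ ($1\le i\le n$) with: $\omega$'s commute, invertible; $\omega_je_i\omega_j^{-1}=\langle\omega_i',\omega_j\rangle e_i$, $\omega_jf_i\omega_j^{-1}=\langle\omega_i',\omega_j\rangle^{-1}f_i$, $\omega_j'e_i\omega_j'^{-1}=\langle\omega_j',\omega_i\rangle^{-1}e_i$, $\omega_j'f_i\omega_j'^{-1}=\langle\omega_j',\omega_i\rangle f_i$, where $\langle\omega_i',\omega_i\rangle=r^2s^{-2}$ ($i<n$), $\langle\omega_n',\omega_n\rangle=rs^{-1}$, $\langle\omega_i',\omega_{i+1}\rangle=r^{-2}$, $\langle\omega_{i+1}',\omega_i\rangle=s^2$ ($i<n$), others $1$; $e_if_j-f_je_i=\delta_{ij}(\omega_i-\omega_i')/(r_i-s_i)$ ($r_i=r^2,s_i=s^2$ for $i<n$; $r_n=r,s_n=s$); Serre relations $(\mathrm{ad}_le_i)^{1-a_{ij}}(e_j)=0=(\mathrm{ad}_rf_i)^{1-a_{ij}}(f_j)$, $i\ne j$, with $(a_{ij})$ the $B_n$ Cartan matrix ($a_{ii}=2$, $a_{i,i+1}=a_{i+1,i}=-1$ for $i\le n-2$, $a_{n-1,n}=-1$, $a_{n,n-1}=-2$, else $0$), $\mathrm{ad}_l(a)(b)=\sum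 a_{(1)}bS(a_{(2)})$, $\mathrm{ad}_r(a)(b)=\sum S(a_{(1)})ba_{(2)}$, for the Hopf structure $\Delta(\omega)=\omega\otimes\omega$, $\Delta(e_i)=e_i\otimes1+\omega_i\otimes e_i$, $\Delta(f_i)=1\otimes f_i+f_i\otimes\omega_i'$, $S(e_i)=-\omega_i^{-1}e_i$, $S(f_i)=-f_i\omega_i'^{-1}$. Root vectors: $\mathcal E_{i,i}=e_i$, $\mathcal E_{i,j}=e_i\mathcal E_{i+1,j}-r^2\mathcal E_{i+1,j}e_i$ ($1\le i<j\le n$), $\mathcal E_{i,n'}=\mathcal E_{i,n}e_n-rs\,e_n\mathcal E_{i,n}$ ($i\le n-1$), $\mathcal E_{i,j'}=\mathcal E_{i,(j+1)'}e_j-s^{-2}e_j\mathcal E_{i,(j+1)'}$ ($1\le i<j\le n-1$). *)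

theory Defs
  imports Complex_Main
begin

inductive_set Kfield :: "complex \<Rightarrow> complex \<Rightarrow> complex set" for r s where
  K_r: "r \<in> Kfield r s"
| K_s: "s \<in> Kfield r s"
| K_one: "1 \<in> Kfield r s"
| K_add: "x \<in> Kfield r s \<Longrightarrow> y \<in> Kfield r s \<Longrightarrow> x + y \<in> Kfield r s"
| K_mult: "x \<in> Kfield r s \<Longrightarrow> y \<in> Kfield r s \<Longrightarrow> x * y \<in> Kfield r s"
| K_uminus: "x \<in> Kfield r s \<Longrightarrow> - x \<in> Kfield r s"
| K_inverse: "x \<in> Kfield r s \<Longrightarrow> inverse x \<in> Kfield r s"

text \<open>A unital ring 'a together with a ring homomorphism from K into its centre,
  i.e. a K-algebra structure (scalar multiplication c.a is sc c * a).\<close>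
definition K_algebra :: "complex \<Rightarrow> complex \<Rightarrow> (complex \<Rightarrow> 'a::ring_1) \<Rightarrow> bool" where
  "K_algebra r s sc \<longleftrightarrow>
     (\<forall>x\<in>Kfield r s. \<forall>y\<in>Kfield r s. sc (x + y) = sc x + sc y \<and> sc (x * y) = sc x * sc y)
   \<and> sc 1 = 1
   \<and> (\<forall>x\<in>Kfield r s. \<forall>a. sc x * a = a * sc x)"

text \<open>The pairing value \<langle>\<omega>'_i, \<omega>_j\<rangle> for so_{2n+1}, indices in {1..n}.\<close>
definition pairing :: "nat \<Rightarrow> complex \<Rightarrow> complex \<Rightarrow> nat \<Rightarrow> nat \<Rightarrow> complex" where
  "pairing n r s i j =
     (if i = j then (if i < n then r^2 * inverse (s^2) else r * inverse s)
      else if j = i + 1 then inverse (r^2)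
      else if i = j + 1 then s^2
      else 1)"

definition cartan_B :: "nat \<Rightarrow> nat \<Rightarrow> nat \<Rightarrow> int" where
  "cartan_B n i j =
     (if i = j then 2
      else if (j = i + 1 \<and> i \<le> n - 2) \<or> (i = j + 1 \<and> j \<le> n - 2) then -1
      else if i = n - 1 \<and> j = n then -1
      else if i = n \<and> j = n - 1 then -2
      else 0)"

definition r_i :: "nat \<Rightarrow> complex \<Rightarrow> nat \<Rightarrow> complex" where
  "r_i n r i = (if i < n then r^2 else r)"

definition s_i :: "nat \<Rightarrow> complex \<Rightarrow> nat \<Rightarrow> complex" where
  "s_i n s i = (if i < n then s^2 else s)"

text \<open>Left adjoint action of e_i: ad_l(e_i)(b) = e_i b S(1) + \<omega>_i b S(e_i)
  = e_i b - \<omega>_i b \<omega>_i^{-1} e_i.\<close>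
definition ad_l :: "(nat \<Rightarrow> 'a::ring_1) \<Rightarrow> (nat \<Rightarrow> 'a) \<Rightarrow> (nat \<Rightarrow> 'a) \<Rightarrow> nat \<Rightarrow> 'a \<Rightarrow> 'a" where
  "ad_l e w winv i b = e i * b - w i * b * winv i * e i"

text \<open>Right adjoint action of f_i: ad_r(f_i)(b) = S(1) b f_i + S(f_i) b \<omega>'_i
  = b f_i - f_i \<omega>'_i^{-1} b \<omega>'_i.\<close>
definition ad_r :: "(nat \<Rightarrow> 'a::ring_1) \<Rightarrow> (nat \<Rightarrow> 'a) \<Rightarrow> (nat \<Rightarrow> 'a) \<Rightarrow> nat \<Rightarrow> 'a \<Rightarrow> 'a" where
  "ad_r f w' w'inv i b = b * f i - f i * w'inv i * b * w' i"

definition Urs_relations ::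
  "nat \<Rightarrow> complex \<Rightarrow> complex \<Rightarrow> (complex \<Rightarrow> 'a::ring_1) \<Rightarrow> (nat \<Rightarrow> 'a) \<Rightarrow> (nat \<Rightarrow> 'a)
   \<Rightarrow> (nat \<Rightarrow> 'a) \<Rightarrow> (nat \<Rightarrow> 'a) \<Rightarrow> (nat \<Rightarrow> 'a) \<Rightarrow> (nat \<Rightarrow> 'a) \<Rightarrow> bool" where
  "Urs_relations n r s sc e f w w' winv w'inv \<longleftrightarrow>
     K_algebra r s sc
   \<and> (\<forall>i\<in>{1..n}. w i * winv i = 1 \<and> winv i * w i = 1 \<and> w' i * w'inv i = 1 \<and> w'inv i * w' i = 1)
   \<and> (\<forall>i\<in>{1..n}. \<forall>j\<in>{1..n}. w i * w j = w j * w i \<and> w i * w' j = w' j * w i \<and> w' i * w' j = w' j * w' i)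
   \<and> (\<forall>i\<in>{1..n}. \<forall>j\<in>{1..n}.
        w j * e i * winv j = sc (pairing n r s i j) * e i
      \<and> w j * f i * winv j = sc (inverse (pairing n r s i j)) * f i
      \<and> w' j * e i * w'inv j = sc (inverse (pairing n r s j i)) * e i
      \<and> w' j * f i * w'inv j = sc (pairing n r s j i) * f i)
   \<and> (\<forall>i\<in>{1..n}. \<forall>j\<in>{1..n}.
        e i * f j - f j * e i =
          (if i = j then sc (inverse (r_i n r i - s_i n s i)) * (w i - w' i) else 0))
   \<and> (\<forall>i\<in>{1..n}. \<forall>j\<in>{1..n}. i \<noteq> j \<longrightarrow>
        (ad_l e w winv i ^^ nat (1 - cartan_B n i j)) (e j) = 0
      \<and> (ad_r f w' w'inv i ^^ nat (1 - cartan_B n i j)) (f j) = 0)"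

fun rootE_rec :: "(complex \<Rightarrow> 'a::ring_1) \<Rightarrow> complex \<Rightarrow> (nat \<Rightarrow> 'a) \<Rightarrow> nat \<Rightarrow> nat \<Rightarrow> 'a" where
  "rootE_rec sc r e i 0 = e i"
| "rootE_rec sc r e i (Suc k) =
     e i * rootE_rec sc r e (i + 1) k - sc (r^2) * rootE_rec sc r e (i + 1) k * e i"

definition rootE :: "(complex \<Rightarrow> 'a::ring_1) \<Rightarrow> complex \<Rightarrow> (nat \<Rightarrow> 'a) \<Rightarrow> nat \<Rightarrow> nat \<Rightarrow> 'a" where
  "rootE sc r e i j = rootE_rec sc r e i (j - i)"

text \<open>Root vectors E_{i,j'}: E_{i,n'} = E_{i,n} e_n - rs e_n E_{i,n},
  E_{i,j'} = E_{i,(j+1)'} e_j - s^{-2} e_j E_{i,(j+1)'}; recursion on k = n - j.\<close>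
fun rootE'_rec :: "nat \<Rightarrow> (complex \<Rightarrow> 'a::ring_1) \<Rightarrow> complex \<Rightarrow> complex \<Rightarrow> (nat \<Rightarrow> 'a) \<Rightarrow> nat \<Rightarrow> nat \<Rightarrow> 'a" where
  "rootE'_rec n sc r s e i 0 =
     rootE sc r e i n * e n - sc (r * s) * e n * rootE sc r e i n"
| "rootE'_rec n sc r s e i (Suc k) =
     rootE'_rec n sc r s e i k * e (n - Suc k)
     - sc (inverse (s^2)) * e (n - Suc k) * rootE'_rec n sc r s e i k"

definition rootE' :: "nat \<Rightarrow> (complex \<Rightarrow> 'a::ring_1) \<Rightarrow> complex \<Rightarrow> complex \<Rightarrow> (nat \<Rightarrow> 'a) \<Rightarrow> nat \<Rightarrow> nat \<Rightarrow> 'a" where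
  "rootE' n sc r s e i j = rootE'_rec n sc r s e i (n - j)"

end

theory Submission imports Defs begin

lemma cen1: "(\<And>t::'a::ring_1. t*c = c*t) \<Longrightarrow> x*(c*s) = c*(x*s)"
  by (metis mult.assoc)

lemma absJ:
  fixes a x y z :: "'a::ring_1"
  assumes ca: "\<And>t. t*a = a*t" and xz: "x*z = z*x"
  shows "x*(y*z - a*z*y) - a*(y*z - a*z*y)*x = (x*y - a*y*x)*z - a*z*(x*y - a*y*x)"
proof -
  have xz': "\<And>t. x*(z*t) = z*(x*t)" by (metis xz mult.assoc)
  note sc = cen1[OF ca, of x] cen1[OF ca, of y] cen1[OF ca, of z] ca[of x] ca[of y] ca[of z]
  show ?thesis by (simp add: algebra_simps sc xz xz')
qed

lemma absC3:
  fixes a x y q :: "'a::ring_1"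
  assumes ca: "\<And>t. t*a = a*t" and qx: "q*x = x*q" and qy: "q*y = y*q"
  shows "q*(x*y - a*y*x) = (x*y - a*y*x)*q"
proof -
  have qx': "\<And>t. q*(x*t) = x*(q*t)" by (metis qx mult.assoc)
  have qy': "\<And>t. q*(y*t) = y*(q*t)" by (metis qy mult.assoc)
  note sc = cen1[OF ca, of x] cen1[OF ca, of y] cen1[OF ca, of q] ca[of x] ca[of y] ca[of q]
  show ?thesis by (simp add: algebra_simps sc qx qx' qy qy')
qed

lemma absL2:
  fixes a b y p z :: "'a::ring_1"
  assumes ca: "\<And>t. t*a = a*t" and cb: "\<And>t. t*b = b*t"
    and yp: "y*p = b*p*y" and yz: "y*z = z*y"
  shows "y*(p*z - a*z*p) = b*(p*z - a*z*p)*y"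
proof -
  have yp': "\<And>t. y*(p*t) = b*(p*(y*t))" by (metis yp mult.assoc cb)
  have yz': "\<And>t. y*(z*t) = z*(y*t)" by (metis yz mult.assoc)
  note sc = cen1[OF ca, of y] cen1[OF ca, of p] cen1[OF ca, of z] ca[of y] ca[of p] ca[of z]
    cen1[OF cb, of y] cen1[OF cb, of p] cen1[OF cb, of z] cb[of y] cb[of p] cb[of z] ca[of b] cen1[OF ca, of b]
  show ?thesis by (simp add: algebra_simps sc yp yp' yz yz')
qed

lemma absL3:
  fixes a b x w z :: "'a::ring_1"
  assumes ca: "\<And>t. t*a = a*t" and cb: "\<And>t. t*b = b*t"
    and xz: "x*z = z*x" and wz: "w*z = b*z*w"
  shows "(x*w - a*w*x)*z = b*z*(x*w - a*w*x)"
proof -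
  have wz': "\<And>t. w*(z*t) = b*(z*(w*t))" by (metis wz mult.assoc cb)
  have xz': "\<And>t. x*(z*t) = z*(x*t)" by (metis xz mult.assoc)
  note sc = cen1[OF ca, of x] cen1[OF ca, of w] cen1[OF ca, of z] ca[of x] ca[of w] ca[of z]
    cen1[OF cb, of x] cen1[OF cb, of w] cen1[OF cb, of z] cb[of x] cb[of w] cb[of z] ca[of b] cen1[OF ca, of b]
  show ?thesis by (simp add: algebra_simps sc wz wz' xz xz')
qed

lemma absC5:
  fixes a b x y u W :: "'a::ring_1"
  assumes ca: "\<And>t. t*a = a*t" and cb: "\<And>t. t*b = b*t"
    and xu: "x*u = b*u*x" and yW: "y*W = W*y" and xW: "x*W = b*W*x" and ud: "u = x*y - a*y*x"
  shows "u*W = b*W*u"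
proof -
  have yW': "\<And>t. y*(W*t) = W*(y*t)" by (metis yW mult.assoc)
  have xW': "\<And>t. x*(W*t) = b*(W*(x*t))" by (metis xW mult.assoc cb)
  note sc = cen1[OF ca, of x] cen1[OF ca, of y] cen1[OF ca, of W] ca[of x] ca[of y] ca[of W]
    cen1[OF cb, of x] cen1[OF cb, of y] cen1[OF cb, of W] cb[of x] cb[of y] cb[of W] ca[of b] cen1[OF ca, of b]
  show ?thesis unfolding ud by (simp add: algebra_simps sc yW yW' xW xW')
qed

lemma absC4:
  fixes a b y p W :: "'a::ring_1"
  assumes ca: "\<And>t. t*a = a*t" and cb: "\<And>t. t*b = b*t"
    and Wp: "W*p = b*p*W" and yW: "y*W = W*y"
  shows "W*(y*p - a*p*y) = b*(y*p - a*p*y)*W"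
proof -
  have yW': "\<And>t. W*(y*t) = y*(W*t)" by (metis yW mult.assoc)
  have Wp': "\<And>t. W*(p*t) = b*(p*(W*t))" by (metis Wp mult.assoc cb)
  note sc = cen1[OF ca, of p] cen1[OF ca, of y] cen1[OF ca, of W] ca[of p] ca[of y] ca[of W]
    cen1[OF cb, of p] cen1[OF cb, of y] cen1[OF cb, of W] cb[of p] cb[of y] cb[of W] ca[of b] cen1[OF ca, of b]
  show ?thesis by (simp add: algebra_simps sc yW[symmetric] yW' Wp Wp')
qed

lemma absC2:
  fixes a b u v w y z :: "'a::ring_1"
  assumes ca: "\<And>t. t*a = a*t" and cb: "\<And>t. t*b = b*t"
  and uy: "u*y = b*y*u" and yv: "y*v = b*v*y" and yw: "y*w = w*y"
  and vd: "v = y*z - a*z*y" and wd: "w = u*z - a*z*u"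
  shows "u*v - a*b*v*u = (b - a)*y*w"
proof -
  have uy': "\<And>t. u*(y*t) = b*(y*(u*t))" using uy by (metis mult.assoc cb)
  have yw': "\<And>t. y*(w*t) = w*(y*t)" using yw by (metis mult.assoc)
  have uz: "u*z = w + a*(z*u)" using wd by (simp add: mult.assoc)
  have uz': "\<And>t. u*(z*t) = w*t + a*(z*(u*t))" using uz by (metis distrib_right mult.assoc ca)
  note sc = cen1[OF ca, of u] cen1[OF ca, of y] cen1[OF ca, of z] cen1[OF ca, of w] cen1[OF ca, of b]
     cen1[OF cb, of u] cen1[OF cb, of y] cen1[OF cb, of z] cen1[OF cb, of w]
     ca[of u] ca[of y] ca[of z] ca[of w] cb[of u] cb[of y] cb[of z] cb[of w] ca[of b]
  show ?thesis unfolding vd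
    by (simp add: algebra_simps uy' uz' sc uy[simplified mult.assoc] uz yw yw')
qed

lemma absC1:
  fixes a b x y z :: "'a::ring_1"
  assumes ca: "\<And>t. t*a = a*t" and cb: "\<And>t. t*b = b*t"
    and canc: "\<And>X. (a+b)*X = 0 \<Longrightarrow> X = 0"
    and xz: "x*z = z*x"
    and R1: "(x*y - a*y*x)*y = b*y*(x*y - a*y*x)"
    and R2: "y*(y*z - a*z*y) = b*(y*z - a*z*y)*y"
  shows "y*((x*y - a*y*x)*z - a*z*(x*y - a*y*x)) = ((x*y - a*y*x)*z - a*z*(x*y - a*y*x))*y"
proof -
  define P1 where "P1 = x*y*y - (a+b)*y*x*y + a*b*y*y*x"
  define P2 where "P2 = y*y*z - (a+b)*y*z*y + a*b*z*y*y"
  define K where "K = x*z - z*x"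
  note sc = cen1[OF ca, of x] cen1[OF ca, of y] cen1[OF ca, of z] ca[of x] ca[of y] ca[of z]
    cen1[OF cb, of x] cen1[OF cb, of y] cen1[OF cb, of z] cb[of x] cb[of y] cb[of z] ca[of b] cen1[OF ca, of b]
  have p1: "P1 = 0" using R1 unfolding P1_def by (simp add: algebra_simps sc)
  have p2: "P2 = 0" using R2 unfolding P2_def by (simp add: algebra_simps sc)
  have k: "K = 0" using xz unfolding K_def by simp
  let ?D = "y*((x*y - a*y*x)*z - a*z*(x*y - a*y*x)) - ((x*y - a*y*x)*z - a*z*(x*y - a*y*x))*y"
  have "(a+b)*?D = x*P2 - P1*z + a*b*(y*y*K - K*y*y + P2*x - z*P1)
      + (a+b)*(-a*(y*y*K) - a*(P2*x) + a*(y*K*y) + a*(z*P1))"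
    unfolding P1_def P2_def K_def by (simp add: algebra_simps sc)
  also have "\<dots> = 0" by (simp add: p1 p2 k)
  finally have "?D = 0" by (rule canc)
  then show ?thesis by simp
qed


fun EE :: "'a::ring_1 \<Rightarrow> (nat \<Rightarrow> 'a) \<Rightarrow> nat \<Rightarrow> nat \<Rightarrow> 'a" where
  "EE a e i 0 = e i"
| "EE a e i (Suc k) = e i * EE a e (i + 1) k - a * EE a e (i + 1) k * e i"

locale BP =
  fixes n :: nat and e :: "nat \<Rightarrow> 'a::ring_1" and a b :: 'a
  assumes ca: "\<And>t. t*a = a*t" and cb: "\<And>t. t*b = b*t"
   and far: "\<And>i j. 1 \<le> i \<Longrightarrow> j \<le> n \<Longrightarrow> i+1 < j \<Longrightarrow> e i * e j = e j * e i"
   and S1: "\<And>i. 1 \<le> i \<Longrightarrow> i < n \<Longrightarrow>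
      e i * (e i * e (i+1) - a * e (i+1) * e i) = b * (e i * e (i+1) - a * e (i+1) * e i) * e i"
   and S2: "\<And>i. 1 \<le> i \<Longrightarrow> i+1 < n \<Longrightarrow>
      (e i * e (i+1) - a * e (i+1) * e i) * e (i+1) = b * e (i+1) * (e i * e (i+1) - a * e (i+1) * e i)"
   and canc: "\<And>X. (a+b)*X = 0 \<Longrightarrow> X = 0"
begin

definition E :: "nat \<Rightarrow> nat \<Rightarrow> 'a" where "E i j = EE a e i (j - i)"

lemma E_same[simp]: "E i i = e i" by (simp add: E_def)

lemma E_Suc: "i < j \<Longrightarrow> E i j = e i * E (i+1) j - a * E (i+1) j * e i"
proof -
  assume "i < j"
  then have "j - i = Suc (j - (i+1))" by simp
  then show ?thesis by (simp add: E_def)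
qed

lemma far_sym: "1 \<le> i \<Longrightarrow> i \<le> n \<Longrightarrow> 1 \<le> j \<Longrightarrow> j \<le> n \<Longrightarrow> (i+1 < j \<or> j+1 < i) \<Longrightarrow> e i * e j = e j * e i"
  using far by (metis le_trans nat_le_linear not_less)

lemma far_eE_aux: "1 \<le> k \<Longrightarrow> k + d \<le> n \<Longrightarrow> 1 \<le> m \<Longrightarrow> m \<le> n \<Longrightarrow> (m+1 < k \<or> k+d+1 < m)
   \<Longrightarrow> e m * EE a e k d = EE a e k d * e m"
proof (induction d arbitrary: k)
  case 0
  then show ?case using far_sym[of m k] by auto
next
  case (Suc d)
  have h1: "e m * e k = e k * e m" using Suc.prems far_sym[of m k] by auto
  have h2: "e m * EE a e (k+1) d = EE a e (k+1) d * e m" using Suc.prems by (intro Suc.IH) auto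
  show ?case using absC3[OF ca h1 h2] by simp
qed

lemma far_eE: "1 \<le> k \<Longrightarrow> k \<le> l \<Longrightarrow> l \<le> n \<Longrightarrow> 1 \<le> m \<Longrightarrow> m \<le> n \<Longrightarrow> (m+1 < k \<or> l+1 < m)
   \<Longrightarrow> e m * E k l = E k l * e m"
  unfolding E_def by (rule far_eE_aux) auto

lemma far_EE_aux: "1 \<le> i \<Longrightarrow> i + d + 1 < k \<Longrightarrow> k \<le> l \<Longrightarrow> l \<le> n
   \<Longrightarrow> EE a e i d * E k l = E k l * EE a e i d"
proof (induction d arbitrary: i)
  case 0
  then show ?case using far_eE[of k l i] by auto
next
  case (Suc d)
  have h1: "E k l * e i = e i * E k l" using Suc.prems far_eE[of k l i] by auto
  have h2: "E k l * EE a e (i+1) d = EE a e (i+1) d * E k l" using Suc.prems by (metis Suc.IH add_Suc add_Suc_right le_add2 le_trans Suc_eq_plus1)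
  show ?case using absC3[OF ca h1 h2] by simp
qed

lemma far_EE: "1 \<le> i \<Longrightarrow> i \<le> j \<Longrightarrow> j + 1 < k \<Longrightarrow> k \<le> l \<Longrightarrow> l \<le> n \<Longrightarrow> E i j * E k l = E k l * E i j"
  unfolding E_def[of i j] by (rule far_EE_aux) auto

lemma split_aux: "1 \<le> i \<Longrightarrow> i + d < j \<Longrightarrow> j \<le> n \<Longrightarrow>
   E i j = E i (i+d) * E (i+d+1) j - a * E (i+d+1) j * E i (i+d)"
proof (induction d arbitrary: i)
  case 0
  then show ?case using E_Suc[of i j] by simp
next
  case (Suc d)
  let ?k = "i + Suc d"
  have IH: "E (i+1) j = E (i+1) ?k * E (?k+1) j - a * E (?k+1) j * E (i+1) ?k"
    using Suc.IH[of "i+1"] Suc.prems by simp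
  have c: "e i * E (?k+1) j = E (?k+1) j * e i" using Suc.prems by (intro far_eE) auto
  have "E i j = e i * E (i+1) j - a * E (i+1) j * e i" using E_Suc[of i j] Suc.prems by simp
  also have "\<dots> = (e i * E (i+1) ?k - a * E (i+1) ?k * e i) * E (?k+1) j - a * E (?k+1) j * (e i * E (i+1) ?k - a * E (i+1) ?k * e i)"
    unfolding IH by (rule absJ[OF ca c])
  also have "e i * E (i+1) ?k - a * E (i+1) ?k * e i = E i ?k" using E_Suc[of i ?k] by simp
  finally show ?case by simp
qed

lemma split: "1 \<le> i \<Longrightarrow> i \<le> k \<Longrightarrow> k < j \<Longrightarrow> j \<le> n \<Longrightarrow>
   E i j = E i k * E (k+1) j - a * E (k+1) j * E i k"
  using split_aux[of i "k - i" j] by simp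


lemma E_step1: "E i (i+1) = e i * e (i+1) - a * e (i+1) * e i"
  using E_Suc[of i "i+1"] by simp

lemma A2: "1 \<le> i \<Longrightarrow> i < j \<Longrightarrow> j \<le> n \<Longrightarrow> e i * E i j = b * E i j * e i"
proof (cases "j = i+1")
  case True
  assume "1 \<le> i" "i < j" "j \<le> n"
  then show ?thesis using S1[of i] True E_step1 by simp
next
  case False
  assume h: "1 \<le> i" "i < j" "j \<le> n"
  have sp: "E i j = E i (i+1) * E (i+2) j - a * E (i+2) j * E i (i+1)"
    using split[of i "i+1" j] h False by (simp add: numeral_2_eq_2)
  have yp: "e i * E i (i+1) = b * E i (i+1) * e i" using S1[of i] h E_step1 by simp
  have yz: "e i * E (i+2) j = E (i+2) j * e i" using h False by (intro far_eE) auto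
  show ?thesis unfolding sp by (rule absL2[OF ca cb yp yz])
qed

lemma A3: "1 \<le> i \<Longrightarrow> i < j \<Longrightarrow> j < n \<Longrightarrow> E i j * e j = b * e j * E i j"
proof (cases "i+1 = j")
  case True
  assume "1 \<le> i" "i < j" "j < n"
  then show ?thesis using S2[of i] True E_step1 by auto
next
  case False
  assume h: "1 \<le> i" "i < j" "j < n"
  have sp: "E i j = E i (j-2) * E (j-1) j - a * E (j-1) j * E i (j-2)"
    using split[of i "j-2" j] h False by (simp add: numeral_2_eq_2 Suc_diff_Suc)
  have wz: "E (j-1) j * e j = b * e j * E (j-1) j" using S2[of "j-1"] h E_step1[of "j-1"] False by simp
  have xz: "E i (j-2) * e j = e j * E i (j-2)" using h False by (intro far_eE[symmetric]) auto
  show ?thesis unfolding sp by (rule absL3[OF ca cb xz wz])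
qed

lemma claim1: "1 \<le> i \<Longrightarrow> i < l \<Longrightarrow> l < j \<Longrightarrow> j \<le> n \<Longrightarrow> e l * E i j = E i j * e l"
proof -
  assume h: "1 \<le> i" "i < l" "l < j" "j \<le> n"
  have u: "E i l = E i (l-1) * e l - a * e l * E i (l-1)" using split[of i "l-1" l] h by simp
  have v: "E l j = e l * E (l+1) j - a * E (l+1) j * e l" using E_Suc[of l j] h by simp
  have W: "E i j = E i l * E (l+1) j - a * E (l+1) j * E i l" using split[of i l j] h by simp
  have R1: "E i l * e l = b * e l * E i l" using A3[of i l] h by simp
  have R2: "e l * E l j = b * E l j * e l" using A2[of l j] h by simp
  have xz: "E i (l-1) * E (l+1) j = E (l+1) j * E i (l-1)" using h by (intro far_EE) auto
  show ?thesis unfolding W u using absC1[OF ca cb canc xz] R1 R2 unfolding u v by blast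
qed

lemma claim5: "1 \<le> i \<Longrightarrow> i \<le> l \<Longrightarrow> l < j \<Longrightarrow> j \<le> n \<Longrightarrow> E i l * E i j = b * E i j * E i l"
proof (induction "l - i" arbitrary: l j)
  case 0
  then have "l = i" by simp
  then show ?case using A2[of i j] 0 by simp
next
  case (Suc d)
  have u: "E i l = E i (l-1) * e l - a * e l * E i (l-1)" using split[of i "l-1" l] Suc.prems Suc.hyps by simp
  have xu: "E i (l-1) * E i l = b * E i l * E i (l-1)" using Suc.hyps Suc.prems by (intro Suc.hyps(1)) auto
  have xW: "E i (l-1) * E i j = b * E i j * E i (l-1)" using Suc.hyps Suc.prems by (intro Suc.hyps(1)) auto
  have yW: "e l * E i j = E i j * e l" using Suc.hyps Suc.prems by (intro claim1) auto
  show ?case by (rule absC5[OF ca cb xu yW xW u])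
qed

lemma claim4: "1 \<le> i \<Longrightarrow> i < l \<Longrightarrow> l \<le> j \<Longrightarrow> j < n \<Longrightarrow> E i j * E l j = b * E l j * E i j"
proof (induction "j - l" arbitrary: l)
  case 0
  then have "l = j" by simp
  then show ?case using A3[of i j] 0 by simp
next
  case (Suc d)
  have v: "E l j = e l * E (l+1) j - a * E (l+1) j * e l" using E_Suc[of l j] Suc.hyps by simp
  have Wp: "E i j * E (l+1) j = b * E (l+1) j * E i j" using Suc.hyps Suc.prems by (intro Suc.hyps(1)) auto
  have yW: "e l * E i j = E i j * e l" using Suc.hyps Suc.prems by (intro claim1) auto
  show ?case unfolding v by (rule absC4[OF ca cb Wp yW])
qed

lemma claim3_aux: "1 \<le> i \<Longrightarrow> i < k \<Longrightarrow> k + d < j \<Longrightarrow> j \<le> n \<Longrightarrow> E i j * EE a e k d = EE a e k d * E i j"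
proof (induction d arbitrary: k)
  case 0
  then show ?case using claim1[of i k j] by simp
next
  case (Suc d)
  have h1: "E i j * e k = e k * E i j" using Suc.prems claim1[of i k j] by simp
  have h2: "E i j * EE a e (k+1) d = EE a e (k+1) d * E i j" using Suc.prems by (intro Suc.IH) auto
  show ?case using absC3[OF ca h1 h2] by simp
qed

lemma claim3: "1 \<le> i \<Longrightarrow> i < k \<Longrightarrow> k \<le> l \<Longrightarrow> l < j \<Longrightarrow> j \<le> n \<Longrightarrow> E i j * E k l = E k l * E i j"
  unfolding E_def[of k l] by (rule claim3_aux) auto

lemma claim2: "1 \<le> i \<Longrightarrow> i < l \<Longrightarrow> l < j \<Longrightarrow> j \<le> n \<Longrightarrow>
   E i l * E l j - a*b * E l j * E i l = (b - a) * e l * E i j"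
proof -
  assume h: "1 \<le> i" "i < l" "l < j" "j \<le> n"
  have v: "E l j = e l * E (l+1) j - a * E (l+1) j * e l" using E_Suc[of l j] h by simp
  have W: "E i j = E i l * E (l+1) j - a * E (l+1) j * E i l" using split[of i l j] h by simp
  have R1: "E i l * e l = b * e l * E i l" using A3[of i l] h by simp
  have R2: "e l * E l j = b * E l j * e l" using A2[of l j] h by simp
  have yw: "e l * E i j = E i j * e l" using h by (intro claim1) auto
  show ?thesis by (rule absC2[OF ca cb R1 R2 yw v W])
qed

end

fun TT :: "'a::ring_1 \<Rightarrow> 'a \<Rightarrow> (nat \<Rightarrow> 'a) \<Rightarrow> nat \<Rightarrow> 'a \<Rightarrow> nat \<Rightarrow> 'a" where
  "TT c d e n X 0 = X * e n - c * e n * X"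
| "TT c d e n X (Suc k) = TT c d e n X k * e (n - Suc k) - d * e (n - Suc k) * TT c d e n X k"

lemma TT_diff: "TT c d e n (X - Y) k = TT c d e n X k - TT c d e n Y k"
proof (induction k)
  case 0
  then show ?case by (simp add: algebra_simps)
next
  case (Suc k)
  show ?case by (simp only: TT.simps Suc.IH) (simp add: algebra_simps)
qed

lemma TT_left:
  assumes cc: "\<And>t. t*c = c*t" and cd: "\<And>t. t*d = d*t"
    and uc: "\<And>m. n - k \<le> m \<Longrightarrow> m \<le> n \<Longrightarrow> u * e m = e m * u"
  shows "TT c d e n (u * X) k = u * TT c d e n X k"
  using uc
proof (induction k)
  case 0
  have "u * e n = e n * u" using 0 by simp
  then show ?case by (simp add: algebra_simps cen1[OF cc] cc) (metis mult.assoc)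
next
  case (Suc k)
  have IH: "TT c d e n (u * X) k = u * TT c d e n X k" using Suc by (intro Suc.IH) auto
  have h: "u * e (n - Suc k) = e (n - Suc k) * u" using Suc.prems by simp
  have h': "\<And>t. e (n - Suc k) * (u * t) = u * (e (n - Suc k) * t)" using h by (metis mult.assoc)
  show ?case by (simp add: IH algebra_simps cen1[OF cd] cd h')
qed

lemma TT_right:
  assumes cc: "\<And>t. t*c = c*t" and cd: "\<And>t. t*d = d*t"
    and uc: "\<And>m. n - k \<le> m \<Longrightarrow> m \<le> n \<Longrightarrow> v * e m = e m * v"
  shows "TT c d e n (X * v) k = TT c d e n X k * v"
  using uc
proof (induction k)
  case 0
  have "v * e n = e n * v" using 0 by simp
  then show ?case by (simp add: algebra_simps cen1[OF cc] cc)
next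
  case (Suc k)
  have IH: "TT c d e n (X * v) k = TT c d e n X k * v" using Suc by (intro Suc.IH) auto
  have h: "v * e (n - Suc k) = e (n - Suc k) * v" using Suc.prems by simp
  have h': "\<And>t. t * (v * e (n - Suc k)) = t * (e (n - Suc k) * v)" using h by simp
  show ?case by (simp add: IH algebra_simps cen1[OF cd] cd h')
qed


context BP begin

lemma far_em: "1 \<le> l \<Longrightarrow> l + 1 < j \<Longrightarrow> n - (n - j) \<le> m \<Longrightarrow> m \<le> n \<Longrightarrow> j \<le> n \<Longrightarrow> e l * e m = e m * e l"
  by (intro far) auto

lemma claim6:
  assumes cc: "\<And>t. t*c = c*t" and cd: "\<And>t. t*d = d*t"
    and h: "1 \<le> i" "i < l" "l + 1 < j" "j \<le> n"
  shows "e l * TT c d e n (E i n) (n - j) = TT c d e n (E i n) (n - j) * e l"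
proof -
  have cm: "\<And>m. n - (n - j) \<le> m \<Longrightarrow> m \<le> n \<Longrightarrow> e l * e m = e m * e l" using h by (intro far_em) auto
  have c1: "e l * E i n = E i n * e l" using h by (intro claim1) auto
  show ?thesis
    using TT_left[OF cc cd cm, where X="E i n"] TT_right[OF cc cd cm, where X="E i n"] c1 by simp
qed

lemma claim8:
  assumes cc: "\<And>t. t*c = c*t" and cd: "\<And>t. t*d = d*t"
    and h: "1 \<le> i" "i < k" "k \<le> l" "l + 1 < j" "j \<le> n"
  shows "TT c d e n (E i n) (n - j) * E k l = E k l * TT c d e n (E i n) (n - j)"
proof -
  have cm: "\<And>m. n - (n - j) \<le> m \<Longrightarrow> m \<le> n \<Longrightarrow> E k l * e m = e m * E k l"
    using h by (intro far_eE[symmetric]) auto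
  have c3: "E i n * E k l = E k l * E i n" using h by (intro claim3) auto
  show ?thesis
    using TT_left[OF cc cd cm, where X="E i n"] TT_right[OF cc cd cm, where X="E i n"] c3 by simp
qed

lemma claim9:
  assumes cc: "\<And>t. t*c = c*t" and cd: "\<And>t. t*d = d*t"
    and h: "1 \<le> i" "i \<le> l" "l + 1 < j" "j \<le> n"
  shows "E i l * TT c d e n (E i n) (n - j) = b * TT c d e n (E i n) (n - j) * E i l"
proof -
  have cm: "\<And>m. n - (n - j) \<le> m \<Longrightarrow> m \<le> n \<Longrightarrow> E i l * e m = e m * E i l"
    using h by (intro far_eE[symmetric]) auto
  have cmb: "\<And>m. n - (n - j) \<le> m \<Longrightarrow> m \<le> n \<Longrightarrow> b * e m = e m * b" using cb by simp
  have c5: "E i l * E i n = b * E i n * E i l" using h by (intro claim5) auto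
  show ?thesis
    using TT_left[OF cc cd cm, where X="E i n"] TT_right[OF cc cd cm, where X="b * E i n"]
      TT_left[OF cc cd cmb, where X="E i n"] c5 by simp
qed

lemma claim7:
  assumes cc: "\<And>t. t*c = c*t" and cd: "\<And>t. t*d = d*t"
    and h: "1 \<le> i" "i < l" "l + 1 < j" "j \<le> n"
  shows "E i l * TT c d e n (E l n) (n - j) - a*b * TT c d e n (E l n) (n - j) * E i l
       = (b - a) * e l * TT c d e n (E i n) (n - j)"
proof -
  have cm: "\<And>m. n - (n - j) \<le> m \<Longrightarrow> m \<le> n \<Longrightarrow> E i l * e m = e m * E i l"
    using h by (intro far_eE[symmetric]) auto
  have cmab: "\<And>m. n - (n - j) \<le> m \<Longrightarrow> m \<le> n \<Longrightarrow> (a*b) * e m = e m * (a*b)"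
    using ca cb by (metis mult.assoc)
  have cml: "\<And>m. n - (n - j) \<le> m \<Longrightarrow> m \<le> n \<Longrightarrow> ((b-a) * e l) * e m = e m * ((b-a) * e l)"
  proof -
    fix m assume m: "n - (n - j) \<le> m" "m \<le> n"
    have "e l * e m = e m * e l" using h m by (intro far_em) auto
    moreover have "e m * (b - a) = (b - a) * e m" by (simp add: right_diff_distrib left_diff_distrib ca cb)
    ultimately show "((b-a) * e l) * e m = e m * ((b-a) * e l)"
      by (metis mult.assoc)
  qed
  have c2: "E i l * E l n - a*b * E l n * E i l = (b - a) * e l * E i n" using h by (intro claim2) auto
  have "TT c d e n (E i l * E l n - a*b * E l n * E i l) (n - j) = TT c d e n ((b - a) * e l * E i n) (n - j)"
    using c2 by simp
  then show ?thesis
    using TT_left[OF cc cd cm, where X="E l n"] TT_right[OF cc cd cm, where X="a*b * E l n"]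
      TT_left[OF cc cd cmab, where X="E l n"] TT_left[OF cc cd cml, where X="E i n"]
    by (simp add: TT_diff)
qed

end

lemma rootE_rec_EE: "rootE_rec sc r e i k = EE (sc (r^2)) e i k"
  by (induction k arbitrary: i) simp_all

lemma rootE_EE: "rootE sc r e i j = EE (sc (r^2)) e i (j - i)"
  by (simp add: rootE_def rootE_rec_EE)

lemma rootE'_TT: "rootE'_rec n sc r s e i k = TT (sc (r*s)) (sc (inverse (s^2))) e n (rootE sc r e i n) k"
  by (induction k) simp_all

lemma K_pow: "x \<in> Kfield r s \<Longrightarrow> x^k \<in> Kfield r s"
  by (induction k) (auto intro: Kfield.intros)

lemma K_diff: "x \<in> Kfield r s \<Longrightarrow> y \<in> Kfield r s \<Longrightarrow> x - y \<in> Kfield r s"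
  using Kfield.K_add[OF _ Kfield.K_uminus] by (metis diff_conv_add_uminus)

lemma conj_mult: "winv * w = (1::'a::ring_1) \<Longrightarrow> w * (X * Y) * winv = (w * X * winv) * (w * Y * winv)"
proof -
  assume h: "winv * w = 1"
  have "(w * X * winv) * (w * Y * winv) = w * X * (winv * w) * Y * winv" by (simp add: mult.assoc)
  then show ?thesis using h by (simp add: mult.assoc)
qed

lemma conj_diff: "w * (X - Y) * winv = w * X * winv - w * Y * (winv::'a::ring_1)"
  by (simp add: algebra_simps)

lemma conj_sc: "(\<And>t. t*c = c*t) \<Longrightarrow> w * (c * X) * winv = c * (w * X * (winv::'a::ring_1))"
  by (metis mult.assoc)


lemma wcomm: "winv * w = (1::'a::ring_1) \<Longrightarrow> w * x * winv = y \<Longrightarrow> w * (x * t) = y * (w * t)"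
proof -
  assume h: "winv * w = 1" "w * x * winv = y"
  have "w * (x * t) = w * x * (winv * w) * t" using h(1) by (simp add: mult.assoc)
  also have "\<dots> = (w * x * winv) * (w * t)" by (simp only: mult.assoc)
  also have "\<dots> = y * (w * t)" using h(2) by simp
  finally show ?thesis .
qed

lemma cenrel: "(\<And>t::'a::ring_1. t*c = c*t) \<Longrightarrow> p * q = c \<Longrightarrow> p * (q * t) = c * t"
  by (metis mult.assoc)

theorem lemma3p3:
  fixes n :: nat and r s :: complex and sc :: "complex \<Rightarrow> 'a::ring_1"
    and e f w w' winv w'inv :: "nat \<Rightarrow> 'a"
  assumes "n \<ge> 2" and "r \<noteq> 0" and "s \<noteq> 0" and "r^3 \<noteq> s^3" and "r^4 \<noteq> s^4"
    and "Urs_relations n r s sc e f w w' winv w'inv"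
  defines "E \<equiv> rootE sc r e" and "E' \<equiv> rootE' n sc r s e"
  shows
    "(\<forall>i l j. 1 \<le> i \<and> i < l \<and> l < j \<and> j \<le> n \<longrightarrow> e l * E i j = E i j * e l)
   \<and> (\<forall>i l j. 1 \<le> i \<and> i < l \<and> l < j \<and> j \<le> n \<longrightarrow>
        E i l * E l j - sc ((r * s)^2) * E l j * E i l = sc (s^2 - r^2) * e l * E i j)
   \<and> (\<forall>i k l j. 1 \<le> i \<and> i < k \<and> k \<le> l \<and> l < j \<and> j \<le> n \<longrightarrow> E i j * E k l = E k l * E i j)
   \<and> (\<forall>i l j. 1 \<le> i \<and> i < l \<and> l \<le> j \<and> j < n \<longrightarrow> E i j * E l j = sc (s^2) * E l j * E i j)
   \<and> (\<forall>i l j. 1 \<le> i \<and> i \<le> l \<and> l < j \<and> j \<le> n \<longrightarrow> E i l * E i j = sc (s^2) * E i j * E i l)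
   \<and> (\<forall>i l j. 1 \<le> i \<and> i < l \<and> l + 1 < j \<and> j \<le> n \<longrightarrow> e l * E' i j = E' i j * e l)
   \<and> (\<forall>i l j. 1 \<le> i \<and> i < l \<and> l + 1 < j \<and> j \<le> n \<longrightarrow>
        E i l * E' l j - sc ((r * s)^2) * E' l j * E i l = sc (s^2 - r^2) * e l * E' i j)
   \<and> (\<forall>i k l j. 1 \<le> i \<and> i < k \<and> k \<le> l \<and> l + 1 < j \<and> j \<le> n \<longrightarrow> E' i j * E k l = E k l * E' i j)
   \<and> (\<forall>i l j. 1 \<le> i \<and> i \<le> l \<and> l + 1 < j \<and> j \<le> n \<longrightarrow> E i l * E' i j = sc (s^2) * E' i j * E i l)"
proof -
  note U = assms(6)[unfolded Urs_relations_def]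
  have KA: "K_algebra r s sc" using U by blast
  have winv: "\<And>i. 1 \<le> i \<Longrightarrow> i \<le> n \<Longrightarrow> winv i * w i = 1" using U by auto
  have conj: "\<And>i j. 1 \<le> i \<Longrightarrow> i \<le> n \<Longrightarrow> 1 \<le> j \<Longrightarrow> j \<le> n \<Longrightarrow> w j * e i * winv j = sc (pairing n r s i j) * e i"
    using U by auto
  have serre: "\<And>i j. 1 \<le> i \<Longrightarrow> i \<le> n \<Longrightarrow> 1 \<le> j \<Longrightarrow> j \<le> n \<Longrightarrow> i \<noteq> j \<Longrightarrow>
      (ad_l e w winv i ^^ nat (1 - cartan_B n i j)) (e j) = 0" using U by auto
  have scadd: "\<And>x y. x \<in> Kfield r s \<Longrightarrow> y \<in> Kfield r s \<Longrightarrow> sc (x+y) = sc x + sc y"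
    using KA unfolding K_algebra_def by blast
  have scmul: "\<And>x y. x \<in> Kfield r s \<Longrightarrow> y \<in> Kfield r s \<Longrightarrow> sc (x*y) = sc x * sc y"
    using KA unfolding K_algebra_def by blast
  have sc1: "sc 1 = 1" using KA unfolding K_algebra_def by blast
  have sccen: "\<And>x t. x \<in> Kfield r s \<Longrightarrow> t * sc x = sc x * t"
    using KA unfolding K_algebra_def by metis
  have Kr: "r \<in> Kfield r s" and Ks: "s \<in> Kfield r s" by (rule Kfield.intros)+
  have Kr2: "r^2 \<in> Kfield r s" and Ks2: "s^2 \<in> Kfield r s" using Kr Ks by (blast intro: K_pow)+
  have Kir2: "inverse (r^2) \<in> Kfield r s" and Kis2: "inverse (s^2) \<in> Kfield r s"
    using Kr2 Ks2 by (blast intro: Kfield.intros)+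
  have KP: "r^2 * inverse (s^2) \<in> Kfield r s" using Kr2 Kis2 by (blast intro: Kfield.intros)
  have Krs: "r * s \<in> Kfield r s" using Kr Ks by (blast intro: Kfield.intros)
  have Kab: "r^2 + s^2 \<in> Kfield r s" using Kr2 Ks2 by (blast intro: Kfield.intros)
  have Kiab: "inverse (r^2 + s^2) \<in> Kfield r s" using Kab by (blast intro: Kfield.intros)
  have K0: "0 \<in> Kfield r s" using Kfield.K_add[OF Kfield.K_one Kfield.K_uminus[OF Kfield.K_one]] by simp
  have sc0: "sc 0 = 0"
  proof -
    have "sc (0 + 0) = sc 0 + sc 0" using scadd[OF K0 K0] .
    then show ?thesis by simp
  qed
  have scneg: "\<And>x. x \<in> Kfield r s \<Longrightarrow> sc (- x) = - sc x"
  proof -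
    fix x assume x: "x \<in> Kfield r s"
    have "sc (x + - x) = sc x + sc (- x)" using scadd[OF x Kfield.K_uminus[OF x]] .
    then have "sc x + sc (- x) = 0" using sc0 by simp
    then show "sc (- x) = - sc x" using add.inverse_unique by metis
  qed
  define a where "a = sc (r^2)"
  define b where "b = sc (s^2)"
  define c where "c = sc (r*s)"
  define d where "d = sc (inverse (s^2))"
  define g where "g = sc (inverse (r^2))"
  define P where "P = sc (r^2 * inverse (s^2))"
  have ca: "\<And>t. t*a = a*t" unfolding a_def using sccen Kr2 by blast
  have cb: "\<And>t. t*b = b*t" unfolding b_def using sccen Ks2 by blast
  have cc: "\<And>t. t*c = c*t" unfolding c_def using sccen Krs by blast
  have cd: "\<And>t. t*d = d*t" unfolding d_def using sccen Kis2 by blast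
  have cg: "\<And>t. t*g = g*t" unfolding g_def using sccen Kir2 by blast
  have cP: "\<And>t. t*P = P*t" unfolding P_def using sccen KP by blast
  have r2: "r^2 \<noteq> 0" and s2: "s^2 \<noteq> 0" using assms(2,3) by auto
  have Pb: "P * b = a" unfolding P_def b_def a_def using scmul[OF KP Ks2] s2 by (simp add: field_simps)
  have bP: "b * P = a" using Pb cb by metis
  have Pg: "P * g = d" unfolding P_def g_def d_def using scmul[OF KP Kir2] r2 by (simp add: field_simps)
  have gP: "g * P = d" using Pg cg by metis
  have ag: "a * g = 1" unfolding a_def g_def using scmul[OF Kr2 Kir2] r2 sc1 by simp
  have bd: "b * d = 1" unfolding b_def d_def using scmul[OF Ks2 Kis2] s2 sc1 by simp
  have abrs: "sc ((r * s)^2) = a * b" unfolding a_def b_def using scmul[OF Kr2 Ks2] by (simp add: power_mult_distrib)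
  have bma: "sc (s^2 - r^2) = b - a" unfolding a_def b_def
    using scadd[OF Ks2 Kfield.K_uminus[OF Kr2]] scneg[OF Kr2] by simp
  have abnz: "r^2 + s^2 \<noteq> 0"
  proof
    assume "r^2 + s^2 = 0"
    then have "r^2 = -(s^2)" by (simp add: add_eq_0_iff)
    then have "(r^2)^2 = (s^2)^2" by (simp only: power2_minus)
    moreover have "r^4 = (r^2)^2" "s^4 = (s^2)^2" by algebra+
    ultimately have "r^4 = s^4" by (simp only:)
    then show False using assms(5) by simp
  qed
  have canc: "\<And>X. (a+b)*X = 0 \<Longrightarrow> X = 0"
  proof -
    fix X assume h: "(a+b)*X = 0"
    have "a + b = sc (r^2 + s^2)" unfolding a_def b_def using scadd[OF Kr2 Ks2] by simp
    moreover have "sc (inverse (r^2 + s^2)) * sc (r^2 + s^2) = 1" using scmul[OF Kiab Kab] abnz sc1 by simp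
    ultimately have "sc (inverse (r^2 + s^2)) * (a + b) = 1" by simp
    then have "X = sc (inverse (r^2 + s^2)) * ((a + b) * X)" by (simp add: mult.assoc[symmetric])
    then show "X = 0" using h by simp
  qed
  have wwinv: "\<And>i. 1 \<le> i \<Longrightarrow> i \<le> n \<Longrightarrow> w i * winv i = 1" using U by auto
  have far: "\<And>i j. 1 \<le> i \<Longrightarrow> j \<le> n \<Longrightarrow> i+1 < j \<Longrightarrow> e i * e j = e j * e i"
  proof -
    fix i j assume h: "1 \<le> i" "j \<le> n" "i+1 < j"
    have cart: "cartan_B n i j = 0" using h by (auto simp: cartan_B_def)
    have "(ad_l e w winv i ^^ nat (1 - cartan_B n i j)) (e j) = 0" using serre[of i j] h by auto
    then have z: "e i * e j - w i * e j * winv i * e i = 0" using cart by (simp add: ad_l_def)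
    have "w i * e j * winv i = e j" using conj[of j i] h sc1 by (simp add: pairing_def)
    then show "e i * e j = e j * e i" using z by simp
  qed
  have S1: "\<And>i. 1 \<le> i \<Longrightarrow> i < n \<Longrightarrow>
      e i * (e i * e (i+1) - a * e (i+1) * e i) = b * (e i * e (i+1) - a * e (i+1) * e i) * e i"
  proof -
    fix i assume h: "1 \<le> i" "i < n"
    define j where "j = i + 1"
    have hj: "j = i + 1" by (simp add: j_def)
    have cart: "cartan_B n i j = -1" using h hj by (auto simp: cartan_B_def)
    have "(ad_l e w winv i ^^ nat (1 - cartan_B n i j)) (e j) = 0" using serre[of i j ] h hj by auto
    then have z: "ad_l e w winv i (ad_l e w winv i (e j)) = 0" using cart by (simp add: numeral_2_eq_2)
    have wi: "winv i * w i = 1" using winv h hj by simp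
    have wi': "w i * winv i = 1" using wwinv h hj by simp
    have c1: "w i * e i * winv i = P * e i" using conj[of i i] h hj unfolding P_def by (simp add: pairing_def)
    have c2: "w i * e j * winv i = b * e j" using conj[of j i] h hj unfolding b_def by (simp add: pairing_def)
    have w1: "\<And>t. w i * (e i * t) = P * (e i * (w i * t))" using wcomm[OF wi c1] by (simp add: mult.assoc)
    have w2: "\<And>t. w i * (e j * t) = b * (e j * (w i * t))" using wcomm[OF wi c2] by (simp add: mult.assoc)
    have w3: "\<And>t. w i * (winv i * t) = t" using wi' by (metis mult.assoc mult_1_left)
    note sc = cen1[OF ca, of "e i"] cen1[OF ca, of "e j"] cen1[OF ca, of "w i"] cen1[OF ca, of "winv i"]
      cen1[OF cb, of "e i"] cen1[OF cb, of "e j"] cen1[OF cb, of "w i"] cen1[OF cb, of "winv i"]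
      cen1[OF cP, of "e i"] cen1[OF cP, of "e j"] cen1[OF cP, of "w i"] cen1[OF cP, of "winv i"]
      ca[of "e i"] ca[of "e j"] ca[of "w i"] ca[of "winv i"]
      cb[of "e i"] cb[of "e j"] cb[of "w i"] cb[of "winv i"]
      cP[of "e i"] cP[of "e j"] cP[of "w i"] cP[of "winv i"]
      cenrel[OF ca Pb] cenrel[OF ca bP] Pb bP ca[of b] cen1[OF ca, of b]
    have "e i * (e i * e j - a * e j * e i) - b * (e i * e j - a * e j * e i) * e i
        = ad_l e w winv i (ad_l e w winv i (e j))"
      unfolding ad_l_def by (simp add: algebra_simps sc w1 w2 w3 wi')
    then have "e i * (e i * e j - a * e j * e i) = b * (e i * e j - a * e j * e i) * e i"
      using z by simp
    then show "e i * (e i * e (i+1) - a * e (i+1) * e i) = b * (e i * e (i+1) - a * e (i+1) * e i) * e i"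
      using hj by simp
  qed
  have S2: "\<And>i. 1 \<le> i \<Longrightarrow> i+1 < n \<Longrightarrow>
      (e i * e (i+1) - a * e (i+1) * e i) * e (i+1) = b * e (i+1) * (e i * e (i+1) - a * e (i+1) * e i)"
  proof -
    fix i assume h: "1 \<le> i" "i+1 < n"
    define j where "j = i + 1"
    have hj: "j = i + 1" by (simp add: j_def)
    have cart: "cartan_B n j i = -1" using h hj by (auto simp: cartan_B_def)
    have "(ad_l e w winv j ^^ nat (1 - cartan_B n j i)) (e i) = 0" using serre[of j i ] h hj by auto
    then have z: "ad_l e w winv j (ad_l e w winv j (e i)) = 0" using cart by (simp add: numeral_2_eq_2)
    have wi: "winv j * w j = 1" using winv h hj by simp
    have wi': "w j * winv j = 1" using wwinv h hj by simp
    have c1: "w j * e j * winv j = P * e j" using conj[of j j] h hj unfolding P_def by (simp add: pairing_def)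
    have c2: "w j * e i * winv j = g * e i" using conj[of i j] h hj unfolding g_def by (simp add: pairing_def)
    have w1: "\<And>t. w j * (e j * t) = P * (e j * (w j * t))" using wcomm[OF wi c1] by (simp add: mult.assoc)
    have w2: "\<And>t. w j * (e i * t) = g * (e i * (w j * t))" using wcomm[OF wi c2] by (simp add: mult.assoc)
    have w3: "\<And>t. w j * (winv j * t) = t" using wi' by (metis mult.assoc mult_1_left)
    note sc = cen1[OF ca, of "e i"] cen1[OF ca, of "e j"] cen1[OF ca, of "w j"] cen1[OF ca, of "winv j"]
      cen1[OF cb, of "e i"] cen1[OF cb, of "e j"] cen1[OF cb, of "w j"] cen1[OF cb, of "winv j"]
      cen1[OF cP, of "e i"] cen1[OF cP, of "e j"] cen1[OF cP, of "w j"] cen1[OF cP, of "winv j"]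
      cen1[OF cg, of "e i"] cen1[OF cg, of "e j"] cen1[OF cg, of "w j"] cen1[OF cg, of "winv j"]
      cen1[OF cd, of "e i"] cen1[OF cd, of "e j"] cen1[OF cd, of "w j"] cen1[OF cd, of "winv j"]
      ca[of "e i"] ca[of "e j"] ca[of "w j"] ca[of "winv j"]
      cb[of "e i"] cb[of "e j"] cb[of "w j"] cb[of "winv j"]
      cP[of "e i"] cP[of "e j"] cP[of "w j"] cP[of "winv j"]
      cg[of "e i"] cg[of "e j"] cg[of "w j"] cg[of "winv j"]
      cd[of "e i"] cd[of "e j"] cd[of "w j"] cd[of "winv j"]
      cenrel[OF cd Pg] cenrel[OF cd gP] Pg gP ca[of b] cen1[OF ca, of b]
      cen1[OF cd, of g] cd[of g]
    have ag': "\<And>t. a * (g * t) = t" using ag by (metis mult.assoc mult_1_left)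
    have bd': "\<And>t. b * (d * t) = t" using bd by (metis mult.assoc mult_1_left)
    have bg: "\<And>t. b * (g * t) = g * (b * t)" using cg by (metis mult.assoc)
    have "(e i * e j - a * e j * e i) * e j - b * e j * (e i * e j - a * e j * e i)
        = a * b * ad_l e w winv j (ad_l e w winv j (e i))"
      unfolding ad_l_def by (simp add: algebra_simps sc w1 w2 w3 wi' ag' bd' bg ag bd)
    then have "(e i * e j - a * e j * e i) * e j = b * e j * (e i * e j - a * e j * e i)"
      using z by simp
    then show "(e i * e (i+1) - a * e (i+1) * e i) * e (i+1) = b * e (i+1) * (e i * e (i+1) - a * e (i+1) * e i)"
      using hj by simp
  qed
  interpret B: BP n e a b using ca cb far S1 S2 canc by unfold_locales auto
  have EB: "\<And>i j. E i j = B.E i j" by (simp add: E_def B.E_def a_def[symmetric] rootE_EE)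
  have E'B: "\<And>i j. E' i j = TT c d e n (B.E i n) (n - j)"
    unfolding E'_def rootE'_def rootE'_TT c_def d_def by (simp add: EB[symmetric] E_def)
  show ?thesis
    unfolding EB E'B abrs bma b_def[symmetric]
    apply (intro conjI allI impI)
    subgoal by (elim conjE) (rule B.claim1; assumption)
    subgoal by (elim conjE) (rule B.claim2; assumption)
    subgoal by (elim conjE) (rule B.claim3; assumption)
    subgoal by (elim conjE) (rule B.claim4; assumption)
    subgoal by (elim conjE) (rule B.claim5; assumption)
    subgoal by (elim conjE) (rule B.claim6[OF cc cd]; assumption)
    subgoal by (elim conjE) (rule B.claim7[OF cc cd]; assumption)
    subgoal by (elim conjE) (rule B.claim8[OF cc cd]; assumption)
    subgoal by (elim conjE) (rule B.claim9[OF cc cd]; assumption)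
    done
qed
end
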